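(* For every $1$-Sperner hypergraph ${\cal H}=(V,{\cal E})$ and every vector $\lambda\in\mathbb{R}^{\cal E}$, if $\lambda^\top A^{\cal H}=\mathbf{1}^\top$ then $\lambda^\top\mathbf{1}\ge1$.
   Context: A hypergraph ${\cal H}=(V,{\cal E})$ consists of a finite vertex set $V$ and a set ${\cal E}$ of subsets of $V$. It is $1$-Sperner if every two distinct hyperedges $e,f$ satisfy $\min\{|e\setminus f|,|f\setminus e|\}=1$. The incidence matrix $A^{\cal H}\in\{0,1\}^{{\cal E}\times V}$ has rows indexed by hyperedges and columns by vertices, with entry $1$ at $(e,v)$ iff $v\in e$. $\mathbf{1}$ denotes the all-ones vector of appropriate dimension. *)

theory Defs
  imports Complex_Main
begin

definition hypergraph :: "'a set \<Rightarrow> 'a set set \<Rightarrow> bool" where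
  "hypergraph V E \<longleftrightarrow> finite V \<and> (\<forall>e\<in>E. e \<subseteq> V)"

definition one_sperner :: "'a set set \<Rightarrow> bool" where
  "one_sperner E \<longleftrightarrow> (\<forall>e\<in>E. \<forall>f\<in>E. e \<noteq> f \<longrightarrow> min (card (e - f)) (card (f - e)) = 1)"

text \<open>Incidence matrix A^H, rows indexed by hyperedges, columns by vertices.\<close>
definition incidence :: "'a set \<Rightarrow> 'a \<Rightarrow> real" where
  "incidence e v = (if v \<in> e then 1 else 0)"

end

theory Submission
  imports Defs
begin

lemma card_split: "finite e \<Longrightarrow> card e = card (e - f) + card (e \<inter> f)"
proof -
  assume "finite e"
  have "e = (e - f) \<union> (e \<inter> f)" by blast
  then have "card e = card ((e - f) \<union> (e \<inter> f))" by simp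
  also have "\<dots> = card (e - f) + card (e \<inter> f)"
    using \<open>finite e\<close> by (intro card_Un_disjoint) auto
  finally show ?thesis .
qed

lemma card_one_le:
  assumes "finite e" "finite f" "min (card (e-f)) (card (f-e)) = 1" "card e \<le> card f"
  shows "card (e-f) = 1"
proof -
  have "card e = card (e - f) + card (e \<inter> f)" using assms(1) by (rule card_split)
  moreover have "card f = card (f - e) + card (f \<inter> e)" using assms(2) by (rule card_split)
  moreover have "f \<inter> e = e \<inter> f" by blast
  ultimately show ?thesis using assms(3,4) by (simp add: min_def split: if_splits)
qed

lemma decomp:
  assumes finF: "finite F" and fin: "\<forall>e\<in>F. finite e" and sp: "one_sperner F"
    and e12: "e1\<in>F" "e2\<in>F" "e1\<noteq>e2"
  shows "\<exists>z. (\<exists>e\<in>F. z\<in>e) \<and> (\<exists>g\<in>F. z\<notin>g) \<and> (\<forall>e\<in>F. \<forall>h\<in>F. z\<in>e \<longrightarrow> z\<notin>h \<longrightarrow> e - h = {z})"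
proof -
  have sp': "\<And>e f. e\<in>F \<Longrightarrow> f\<in>F \<Longrightarrow> e\<noteq>f \<Longrightarrow> min (card (e-f)) (card (f-e)) = 1"
    using sp unfolding one_sperner_def by blast
  have K: "\<And>e f. e\<in>F \<Longrightarrow> f\<in>F \<Longrightarrow> e\<noteq>f \<Longrightarrow> card e \<le> card f \<Longrightarrow> card (e-f) = 1"
  proof -
    fix e f assume "e\<in>F" "f\<in>F" "e\<noteq>f" "card e \<le> card f"
    then show "card (e-f) = 1" using card_one_le[OF _ _ sp'] fin by blast
  qed
  have pos: "\<And>e f. e\<in>F \<Longrightarrow> f\<in>F \<Longrightarrow> e\<noteq>f \<Longrightarrow> e - f \<noteq> {}"
  proof -
    fix e f assume "e\<in>F" "f\<in>F" "e\<noteq>f"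
    then have "min (card (e-f)) (card (f-e)) = 1" by (rule sp')
    then have "card (e-f) \<ge> 1" by (simp add: min_def split: if_splits)
    then show "e - f \<noteq> {}" by (metis card.empty not_one_le_zero)
  qed
  have one: "\<And>e f. e\<in>F \<Longrightarrow> f\<in>F \<Longrightarrow> e\<noteq>f \<Longrightarrow> card (e-f) = 1 \<or> card (f-e) = 1"
  proof -
    fix e f assume "e\<in>F" "f\<in>F" "e\<noteq>f"
    then have "min (card (e-f)) (card (f-e)) = 1" by (rule sp')
    then show "card (e-f) = 1 \<or> card (f-e) = 1" by (simp add: min_def split: if_splits)
  qed
  have "card ` F \<noteq> {}" "finite (card ` F)" using e12 finF by auto
  then have "Min (card ` F) \<in> card ` F" by (simp add: Min_in)
  then obtain e0 where e0F: "e0 \<in> F" and e0c: "card e0 = Min (card ` F)" by auto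
  have e0min: "\<And>f. f\<in>F \<Longrightarrow> card e0 \<le> card f" unfolding e0c using finF by (intro Min_le) auto
  have "card ` (F - {e0}) \<noteq> {}" "finite (card ` (F - {e0}))" using e12 finF by auto
  then have "Max (card ` (F - {e0})) \<in> card ` (F - {e0})" by (simp add: Max_in)
  then obtain g where gF0: "g \<in> F - {e0}" and gc: "card g = Max (card ` (F - {e0}))"
    by (metis (no_types, lifting) imageE)
  then have gF: "g \<in> F" "g \<noteq> e0" by auto
  have gmax: "\<And>f. f\<in>F \<Longrightarrow> f \<noteq> e0 \<Longrightarrow> card f \<le> card g" unfolding gc using finF by (intro Max_ge) auto
  have "card (e0 - g) = 1" using K[OF e0F gF(1)] gF(2) e0min[OF gF(1)] by auto
  then obtain z where z: "e0 - g = {z}" by (metis card_1_singletonE)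
  have ze0: "z \<in> e0" and zg: "z \<notin> g" using z by auto
  have hcov: "\<And>h. h\<in>F \<Longrightarrow> z\<notin>h \<Longrightarrow> e0 - {z} \<subseteq> h"
  proof -
    fix h assume hF: "h\<in>F" and zh: "z\<notin>h"
    then have "h \<noteq> e0" using ze0 by auto
    then have "card (e0 - h) = 1" using K[OF e0F hF] e0min[OF hF] by auto
    then obtain a where a: "e0 - h = {a}" by (metis card_1_singletonE)
    then have "a = z" using ze0 zh by auto
    then show "e0 - {z} \<subseteq> h" using a by auto
  qed
  have main: "\<forall>e\<in>F. \<forall>h\<in>F. z\<in>e \<longrightarrow> z\<notin>h \<longrightarrow> e - h = {z}"
  proof (intro ballI impI)
    fix e h assume eF: "e\<in>F" and hF: "h\<in>F" and ze: "z\<in>e" and zh: "z\<notin>h"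
    show "e - h = {z}"
    proof (cases "e = e0")
      case True
      then show ?thesis using hcov[OF hF zh] ze zh by auto
    next
      case False
      then have "e0 - e \<noteq> {}" using pos[OF e0F eF] by auto
      then obtain b where b: "b \<in> e0" "b \<notin> e" by auto
      have bz: "b \<noteq> z" using b ze by auto
      have bg: "b \<in> g" using hcov[OF gF(1) zg] b bz by auto
      have bh: "b \<in> h" using hcov[OF hF zh] b bz by auto
      have ceg: "card e \<le> card g" using gmax[OF eF False] .
      have step1: "e - {z} \<subseteq> g"
      proof -
        have "e \<noteq> g" using ze zg by auto
        then consider "card (e-g) = 1" | "card (g-e) = 1" using one[OF eF gF(1)] by blast
        then show ?thesis
        proof cases
          case 1
          then obtain a where a: "e - g = {a}" by (metis card_1_singletonE)
          then have "a = z" using ze zg by auto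
          then show ?thesis using a by auto
        next
          case 2
          then obtain a where a: "g - e = {a}" by (metis card_1_singletonE)
          then have "a = b" using bg b by auto
          then have sub: "g - {b} \<subseteq> e - {z}" using a zg by auto
          have fe: "finite e" "finite g" using fin eF gF by auto
          have c1: "card (g - {b}) = card g - 1" using bg fe by simp
          have c2: "card (e - {z}) = card e - 1" using ze fe by simp
          have "card g > 0" using bg fe(2) card_gt_0_iff by blast
          have fe2: "finite (e - {z})" using fe by simp
          have "card (g - {b}) \<le> card (e - {z})" using card_mono[OF fe2 sub] .
          then have "card (g - {b}) = card (e - {z})" using c1 c2 ceg \<open>card g > 0\<close> by linarith
          then have "g - {b} = e - {z}" using card_subset_eq[OF fe2 sub] by blast
          then show ?thesis by auto
        qed
      qed
      have "e \<noteq> h" using ze zh by auto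
      then consider "card (e-h) = 1" | "card (h-e) = 1" using one[OF eF hF] by blast
      then show ?thesis
      proof cases
        case 1
        then obtain a where a: "e - h = {a}" by (metis card_1_singletonE)
        then have "a = z" using ze zh by auto
        then show ?thesis using a by auto
      next
        case 2
        then obtain a where a: "h - e = {a}" by (metis card_1_singletonE)
        then have "a = b" using bh b by auto
        have hg: "h \<subseteq> g"
        proof
          fix x assume "x \<in> h"
          show "x \<in> g"
          proof (cases "x = b")
            case True then show ?thesis using bg by simp
          next
            case False
            then have "x \<in> e" using a \<open>a = b\<close> \<open>x\<in>h\<close> by auto
            moreover have "x \<noteq> z" using zh \<open>x\<in>h\<close> by auto
            ultimately show ?thesis using step1 by auto
          qed
        qed
        show ?thesis
        proof (cases "h = g")
          case True then show ?thesis using step1 ze zh by auto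
        next
          case False
          then show ?thesis using pos[OF hF gF(1) False] hg by auto
        qed
      qed
    qed
  qed
  show ?thesis using main e0F ze0 gF(1) zg by blast
qed

definition tsp :: "'a set \<Rightarrow> 'a set set \<Rightarrow> bool" where
  "tsp W E \<longleftrightarrow> (\<forall>e\<in>E. \<forall>f\<in>E. e\<noteq>f \<longrightarrow> min (card ((e-f)\<inter>W)) (card ((f-e)\<inter>W)) = 1)"

lemma tsp_pos:
  assumes "tsp W E" "e\<in>E" "f\<in>E" "e\<noteq>f"
  shows "(e - f) \<inter> W \<noteq> {}"
proof -
  have "min (card ((e-f)\<inter>W)) (card ((f-e)\<inter>W)) = 1" using assms unfolding tsp_def by blast
  then have "card ((e-f)\<inter>W) \<ge> 1" by (simp add: min_def split: if_splits)
  then show ?thesis by (metis card.empty not_one_le_zero)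
qed

lemma decompW:
  assumes "finite W" "finite E" "tsp W E" "e1\<in>E" "e2\<in>E" "e1\<noteq>e2"
  shows "\<exists>z\<in>W. (\<exists>e\<in>E. z\<in>e) \<and> (\<exists>g\<in>E. z\<notin>g) \<and> (\<forall>e\<in>E. \<forall>h\<in>E. z\<in>e \<longrightarrow> z\<notin>h \<longrightarrow> (e-h)\<inter>W = {z})"
proof -
  define F where "F = (\<lambda>e. e \<inter> W) ` E"
  have finF: "finite F" using assms(2) unfolding F_def by simp
  have fin: "\<forall>e\<in>F. finite e" using assms(1) unfolding F_def by auto
  have sp: "one_sperner F"
    unfolding one_sperner_def
  proof (intro ballI impI)
    fix a b assume "a \<in> F" "b \<in> F" "a \<noteq> b"
    then obtain e f where ef: "e\<in>E" "f\<in>E" "a = e \<inter> W" "b = f \<inter> W" unfolding F_def by auto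
    then have "e \<noteq> f" using \<open>a\<noteq>b\<close> by auto
    then have "min (card ((e-f)\<inter>W)) (card ((f-e)\<inter>W)) = 1" using assms(3) ef unfolding tsp_def by blast
    moreover have "(e-f)\<inter>W = a - b" "(f-e)\<inter>W = b - a" using ef by auto
    ultimately show "min (card (a - b)) (card (b - a)) = 1" by simp
  qed
  have neq: "e1 \<inter> W \<noteq> e2 \<inter> W" using tsp_pos[OF assms(3,4,5,6)] by blast
  have i1: "e1 \<inter> W \<in> F" and i2: "e2 \<inter> W \<in> F" using assms(4,5) unfolding F_def by auto
  obtain z where zz: "(\<exists>e\<in>F. z\<in>e) \<and> (\<exists>g\<in>F. z\<notin>g) \<and> (\<forall>e\<in>F. \<forall>h\<in>F. z\<in>e \<longrightarrow> z\<notin>h \<longrightarrow> e - h = {z})"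
    using decomp[OF finF fin sp i1 i2 neq] by blast
  then have z1: "\<exists>e\<in>F. z\<in>e" and z2: "\<exists>g\<in>F. z\<notin>g"
    and z3: "\<forall>e\<in>F. \<forall>h\<in>F. z\<in>e \<longrightarrow> z\<notin>h \<longrightarrow> e - h = {z}" by auto
  from z1 obtain e where "e \<in> E" "z \<in> e \<inter> W" unfolding F_def by auto
  then have zW: "z \<in> W" and ze: "\<exists>e\<in>E. z\<in>e" by auto
  from z2 obtain g where "g \<in> E" "z \<notin> g \<inter> W" unfolding F_def by auto
  then have zg: "\<exists>g\<in>E. z\<notin>g" using zW by auto
  have all: "\<forall>e\<in>E. \<forall>h\<in>E. z\<in>e \<longrightarrow> z\<notin>h \<longrightarrow> (e-h)\<inter>W = {z}"
  proof (intro ballI impI)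
    fix e h assume "e\<in>E" "h\<in>E" "z\<in>e" "z\<notin>h"
    have i: "e \<inter> W \<in> F" and j: "h \<inter> W \<in> F" using \<open>e\<in>E\<close> \<open>h\<in>E\<close> unfolding F_def by auto
    have zi: "z \<in> e \<inter> W" and zo: "z \<notin> h \<inter> W" using \<open>z\<in>e\<close> \<open>z\<notin>h\<close> zW by auto
    have "e \<inter> W - h \<inter> W = {z}" by (rule z3[rule_format, OF i j zi zo])
    then show "(e-h)\<inter>W = {z}" by (simp only: Diff_Int_distrib2)
  qed
  show ?thesis
    apply (rule bexI[where x=z])
     apply (intro conjI)
       apply (rule ze)
      apply (rule zg)
     apply (rule all)
    apply (rule zW)
    done
qed

lemma sum_inc_split:
  assumes "finite E"
  shows "(\<Sum>e\<in>E. f e) = (\<Sum>e\<in>{e\<in>E. z\<in>e}. f e) + (\<Sum>e\<in>{e\<in>E. z\<notin>e}. f e)"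
proof -
  have "E = {e\<in>E. z\<in>e} \<union> {e\<in>E. z\<notin>e}" by auto
  then have "(\<Sum>e\<in>E. f e) = (\<Sum>e\<in>{e\<in>E. z\<in>e} \<union> {e\<in>E. z\<notin>e}. f e)" by (rule arg_cong)
  also have "\<dots> = (\<Sum>e\<in>{e\<in>E. z\<in>e}. f e) + (\<Sum>e\<in>{e\<in>E. z\<notin>e}. f e)"
    using assms by (intro sum.union_disjoint) auto
  finally show ?thesis .
qed

lemma main:
  fixes W :: "'a set" and E :: "'a set set" and lam :: "'a set \<Rightarrow> real"
  assumes "finite W" "W \<noteq> {}" "finite E" "tsp W E"
    "\<forall>v\<in>W. (\<Sum>e\<in>E. lam e * incidence e v) = 1"
  shows "(\<Sum>e\<in>E. lam e) \<ge> 1"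
  using assms
proof (induction "card W" arbitrary: W E lam rule: less_induct)
  case less
  note finW = less.prems(1) and Wne = less.prems(2) and finE = less.prems(3)
    and tspE = less.prems(4) and eqs = less.prems(5)
  obtain w where wW: "w \<in> W" using Wne by auto
  show ?case
  proof (cases "\<exists>e1\<in>E. \<exists>e2\<in>E. e1\<noteq>e2")
    case False
    have "E \<noteq> {}" using eqs wW by auto
    then obtain e where "e \<in> E" by auto
    then have Ee: "E = {e}" using False by auto
    have "lam e * incidence e w = 1" using eqs wW Ee by simp
    then have "lam e = 1" unfolding incidence_def by (simp split: if_splits)
    then show ?thesis using Ee by simp
  next
    case True
    then obtain e1 e2 where e12: "e1\<in>E" "e2\<in>E" "e1\<noteq>e2" by auto
    obtain z where zW: "z\<in>W" and zz: "(\<exists>e\<in>E. z\<in>e) \<and> (\<exists>g\<in>E. z\<notin>g) \<and> (\<forall>e\<in>E. \<forall>h\<in>E. z\<in>e \<longrightarrow> z\<notin>h \<longrightarrow> (e-h)\<inter>W = {z})"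
      using decompW[OF finW finE tspE e12] by (elim bexE) 
    have zin: "\<exists>e\<in>E. z\<in>e" and zout: "\<exists>g\<in>E. z\<notin>g"
      and zsep: "\<forall>e\<in>E. \<forall>h\<in>E. z\<in>e \<longrightarrow> z\<notin>h \<longrightarrow> (e-h)\<inter>W = {z}" using zz by simp_all
    define Ez where "Ez = {e\<in>E. z\<in>e}"
    define Eo where "Eo = {e\<in>E. z\<notin>e}"
    define V1 where "V1 = {v\<in>W. v\<noteq>z \<and> (\<exists>e\<in>Ez. v\<in>e)}"
    define W2 where "W2 = W - V1 - {z}"
    have finEz: "finite Ez" and finEo: "finite Eo" using finE unfolding Ez_def Eo_def by auto
    have split: "\<And>f. (\<Sum>e\<in>E. f e) = (\<Sum>e\<in>Ez. f e) + (\<Sum>e\<in>Eo. f e)"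
      unfolding Ez_def Eo_def by (rule sum_inc_split[OF finE])
    have hz: "(\<Sum>e\<in>Ez. lam e) = 1"
    proof -
      have "(\<Sum>e\<in>E. lam e * incidence e z) = 1" using eqs zW by blast
      moreover have "(\<Sum>e\<in>Ez. lam e * incidence e z) = (\<Sum>e\<in>Ez. lam e)"
        unfolding Ez_def incidence_def by (intro sum.cong) auto
      moreover have "(\<Sum>e\<in>Eo. lam e * incidence e z) = 0"
        unfolding Eo_def incidence_def by (intro sum.neutral) auto
      ultimately show ?thesis using split[of "\<lambda>e. lam e * incidence e z"] by simp
    qed
    have V1sub: "\<And>v g. v \<in> V1 \<Longrightarrow> g \<in> Eo \<Longrightarrow> v \<in> g"
    proof -
      fix v g assume "v \<in> V1" "g \<in> Eo"
      then obtain e where "e \<in> Ez" "v \<in> e" "v \<in> W" "v \<noteq> z" unfolding V1_def by auto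
      moreover have "(e-g)\<inter>W = {z}"
      proof -
        have "e \<in> E" "z \<in> e" using \<open>e\<in>Ez\<close> unfolding Ez_def by auto
        moreover have "g \<in> E" "z \<notin> g" using \<open>g\<in>Eo\<close> unfolding Eo_def by auto
        ultimately show ?thesis using zsep by simp
      qed
      ultimately show "v \<in> g" by (metis Diff_iff IntI singletonD)
    qed
    have ztr: "\<And>e v. e \<in> Ez \<Longrightarrow> v \<in> W \<Longrightarrow> v \<in> e \<Longrightarrow> v \<noteq> z \<Longrightarrow> v \<in> V1"
      unfolding V1_def by blast
    have V1W: "V1 \<subseteq> W" and zV1: "z \<notin> V1" unfolding V1_def by auto
    have hsum: "(\<Sum>e\<in>E. lam e) = 1 + (\<Sum>e\<in>Eo. lam e)" using split[of lam] hz by simp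
    have "(\<Sum>e\<in>Eo. lam e) \<ge> 0"
    proof (cases "W2 = {}")
      case False
      have finW2: "finite W2" using finW unfolding W2_def by simp
      have cW2: "card W2 < card W" using zW finW unfolding W2_def
        by (intro psubset_card_mono) auto
      have tsp2: "tsp W2 Eo" unfolding tsp_def
      proof (intro ballI impI)
        fix f g assume "f \<in> Eo" "g \<in> Eo" "f \<noteq> g"
        have fE: "f \<in> E" "z \<notin> f" using \<open>f\<in>Eo\<close> unfolding Eo_def by auto
        have gE: "g \<in> E" "z \<notin> g" using \<open>g\<in>Eo\<close> unfolding Eo_def by auto
        have e1: "(f-g)\<inter>W2 = (f-g)\<inter>W"
        proof
          show "(f-g)\<inter>W2 \<subseteq> (f-g)\<inter>W" unfolding W2_def by blast
          show "(f-g)\<inter>W \<subseteq> (f-g)\<inter>W2"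
          proof
            fix x assume x: "x \<in> (f-g)\<inter>W"
            then have "x \<notin> V1" using V1sub[OF _ \<open>g\<in>Eo\<close>] by blast
            moreover have "x \<noteq> z" using x fE by blast
            ultimately show "x \<in> (f-g)\<inter>W2" using x unfolding W2_def by blast
          qed
        qed
        have e2: "(g-f)\<inter>W2 = (g-f)\<inter>W"
        proof
          show "(g-f)\<inter>W2 \<subseteq> (g-f)\<inter>W" unfolding W2_def by blast
          show "(g-f)\<inter>W \<subseteq> (g-f)\<inter>W2"
          proof
            fix x assume x: "x \<in> (g-f)\<inter>W"
            then have "x \<notin> V1" using V1sub[OF _ \<open>f\<in>Eo\<close>] by blast
            moreover have "x \<noteq> z" using x gE by blast
            ultimately show "x \<in> (g-f)\<inter>W2" using x unfolding W2_def by blast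
          qed
        qed
        show "min (card ((f-g)\<inter>W2)) (card ((g-f)\<inter>W2)) = 1"
          unfolding e1 e2 using tspE[unfolded tsp_def, rule_format, OF fE(1) gE(1) \<open>f\<noteq>g\<close>] .
      qed
      have eq2: "\<forall>v\<in>W2. (\<Sum>e\<in>Eo. lam e * incidence e v) = 1"
      proof
        fix v assume "v \<in> W2"
        then have vW: "v \<in> W" and vV1: "v \<notin> V1" and vz: "v \<noteq> z" unfolding W2_def by auto
        have "(\<Sum>e\<in>Ez. lam e * incidence e v) = 0"
          unfolding incidence_def using ztr vW vV1 vz by (intro sum.neutral) auto
        then show "(\<Sum>e\<in>Eo. lam e * incidence e v) = 1"
          using eqs vW split[of "\<lambda>e. lam e * incidence e v"] by simp
      qed
      have "(\<Sum>e\<in>Eo. lam e) \<ge> 1" using less.hyps[OF cW2 finW2 False finEo tsp2 eq2] .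
      then show ?thesis by simp
    next
      case True
      then have WV: "W \<subseteq> insert z V1" unfolding W2_def by auto
      obtain e where eEz: "e \<in> Ez" using zin unfolding Ez_def by auto
      obtain g where gEo: "g \<in> Eo" using zout unfolding Eo_def by auto
      have V1ne: "V1 \<noteq> {}"
      proof
        assume "V1 = {}"
        then have "W \<subseteq> {z}" using WV by auto
        moreover have "(g - e) \<inter> W \<noteq> {}" using tsp_pos[OF tspE, of g e] eEz gEo
          unfolding Ez_def Eo_def by auto
        ultimately show False using gEo unfolding Eo_def by auto
      qed
      define c where "c = (\<Sum>e\<in>Eo. lam e)"
      show ?thesis
      proof (cases "c \<ge> 1")
        case True then show ?thesis unfolding c_def by simp
      next
        case False
        then have pos: "1 - c > 0" by simp
        have finV1: "finite V1" using finW V1W finite_subset by blast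
        have cV1: "card V1 < card W" using zW zV1 V1W finW by (intro psubset_card_mono) auto
        have tsp1: "tsp V1 Ez" unfolding tsp_def
        proof (intro ballI impI)
          fix f h assume "f \<in> Ez" "h \<in> Ez" "f \<noteq> h"
          have fE: "f \<in> E" "z \<in> f" using \<open>f\<in>Ez\<close> unfolding Ez_def by auto
          have hE: "h \<in> E" "z \<in> h" using \<open>h\<in>Ez\<close> unfolding Ez_def by auto
          have e1: "(f-h)\<inter>V1 = (f-h)\<inter>W"
          proof
            show "(f-h)\<inter>V1 \<subseteq> (f-h)\<inter>W" using V1W by blast
            show "(f-h)\<inter>W \<subseteq> (f-h)\<inter>V1"
            proof
              fix x assume x: "x \<in> (f-h)\<inter>W"
              then have "x \<noteq> z" using hE by blast
              then show "x \<in> (f-h)\<inter>V1" using ztr[OF \<open>f\<in>Ez\<close>] x by blast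
            qed
          qed
          have e2: "(h-f)\<inter>V1 = (h-f)\<inter>W"
          proof
            show "(h-f)\<inter>V1 \<subseteq> (h-f)\<inter>W" using V1W by blast
            show "(h-f)\<inter>W \<subseteq> (h-f)\<inter>V1"
            proof
              fix x assume x: "x \<in> (h-f)\<inter>W"
              then have "x \<noteq> z" using fE by blast
              then show "x \<in> (h-f)\<inter>V1" using ztr[OF \<open>h\<in>Ez\<close>] x by blast
            qed
          qed
          show "min (card ((f-h)\<inter>V1)) (card ((h-f)\<inter>V1)) = 1"
            unfolding e1 e2 using tspE[unfolded tsp_def, rule_format, OF fE(1) hE(1) \<open>f\<noteq>h\<close>] .
        qed
        have eq1: "\<forall>v\<in>V1. (\<Sum>e\<in>Ez. lam e / (1 - c) * incidence e v) = 1"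
        proof
          fix v assume vV1: "v \<in> V1"
          have "(\<Sum>e\<in>Eo. lam e * incidence e v) = c"
            unfolding c_def incidence_def using V1sub vV1 by (intro sum.cong) auto
          then have "(\<Sum>e\<in>Ez. lam e * incidence e v) = 1 - c"
            using eqs V1W vV1 split[of "\<lambda>e. lam e * incidence e v"] by auto
          moreover have "(\<Sum>e\<in>Ez. lam e / (1 - c) * incidence e v) = (\<Sum>e\<in>Ez. lam e * incidence e v) / (1 - c)"
            by (simp add: sum_divide_distrib)
          ultimately show "(\<Sum>e\<in>Ez. lam e / (1 - c) * incidence e v) = 1" using pos by simp
        qed
        have "(\<Sum>e\<in>Ez. lam e / (1 - c)) \<ge> 1" using less.hyps[OF cV1 finV1 V1ne finEz tsp1 eq1] .
        then have "1 / (1 - c) \<ge> 1" using hz by (simp add: sum_divide_distrib[symmetric])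
        then have "1 \<ge> 1 - c" using pos by (simp add: field_simps)
        then show ?thesis unfolding c_def by simp
      qed
    qed
    then show ?thesis using hsum by simp
  qed
qed

theorem corollary14:
  fixes V :: "'a set" and E :: "'a set set" and lam :: "'a set \<Rightarrow> real"
  assumes "hypergraph V E" and "V \<noteq> {}" and "one_sperner E"
    and "\<forall>v\<in>V. (\<Sum>e\<in>E. lam e * incidence e v) = 1"
  shows "(\<Sum>e\<in>E. lam e) \<ge> 1"
proof -
  have finV: "finite V" and sub: "\<forall>e\<in>E. e \<subseteq> V" using assms(1) unfolding hypergraph_def by auto
  have finE: "finite E" using finV sub by (meson Pow_iff finite_Pow_iff finite_subset subsetI)
  have "tsp V E" unfolding tsp_def
  proof (intro ballI impI)
    fix e f assume "e\<in>E" "f\<in>E" "e\<noteq>f"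
    then have "(e-f)\<inter>V = e - f" "(f-e)\<inter>V = f - e" using sub by auto
    then show "min (card ((e-f)\<inter>V)) (card ((f-e)\<inter>V)) = 1"
      using assms(3) \<open>e\<in>E\<close> \<open>f\<in>E\<close> \<open>e\<noteq>f\<close> unfolding one_sperner_def by simp
  qed
  then show ?thesis using main[OF finV assms(2) finE _ assms(4)] by blast
qed

end
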